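(* Let $k\ge1$, $n\ge0$, $j\ge0$ be integers. The number of $k$-Dyck prefixes with exactly $n+1$ up-steps, whose last step is an up-step, and which end at height $j+k$, equals $$\sum_{0\le m\le j/k}(-1)^m\binom{j-km}{m}\frac1{1+(n-m)(k+1)}\binom{1+(n-m)(k+1)}{n-m}\;-\;(-1)^n\binom{j-1-kn}{n}.$$
   Context: A $k$-Dyck prefix is a lattice path starting at $(0,0)$ with up-steps $(1,k)$ and down-steps $(1,-1)$ that never goes below the $x$-axis; the height of a point is its $y$-coordinate. Binomial conventions: $\binom{a}{b}=0$ if $b<0$; for $a\ge0$, $\binom{a}{b}=0$ if $b>a$; and the term $\binom{j-1-kn}{n}$ is taken to be $0$ when $j-1-kn<0$ (it is the coefficient of $z^nu^{j-1}$ in $1/(1-u+zu^{k+1})$). *)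

theory Defs
  imports Complex_Main
begin

text \<open>A path is a list of steps; True = up-step (1,k), False = down-step (1,-1).\<close>

definition path_height :: "nat \<Rightarrow> bool list \<Rightarrow> int" where
  "path_height k ws = (\<Sum>s\<leftarrow>ws. if s then int k else -1)"

definition is_k_dyck_prefix :: "nat \<Rightarrow> bool list \<Rightarrow> bool" where
  "is_k_dyck_prefix k ws \<longleftrightarrow> (\<forall>i\<le>length ws. path_height k (take i ws) \<ge> 0)"

definition num_up :: "bool list \<Rightarrow> nat" where
  "num_up ws = length (filter id ws)"

text \<open>Binomial coefficient with integer arguments following the paper's conventions:
  0 if the lower index is negative, 0 if the upper index is negative (only used where
  the paper declares such terms 0), and the usual value otherwise (0 when b > a).\<close>
definition ibinom :: "int \<Rightarrow> int \<Rightarrow> real" where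
  "ibinom a b = (if b < 0 \<or> a < 0 then 0 else real (nat a choose nat b))"

end

theory Submission
  imports Defs
begin


lemma ph_Nil[simp]: "path_height k [] = 0"
  by (simp add: path_height_def)
lemma ph_append[simp]: "path_height k (xs @ ys) = path_height k xs + path_height k ys"
  by (simp add: path_height_def)
lemma ph_Cons[simp]: "path_height k (x # xs) = (if x then int k else -1) + path_height k xs"
  by (simp add: path_height_def)
lemma nu_append[simp]: "num_up (xs @ ys) = num_up xs + num_up ys"
  by (simp add: num_up_def)
lemma nu_Nil[simp]: "num_up [] = 0" by (simp add: num_up_def)
lemma nu_Cons[simp]: "num_up (x # xs) = (if x then Suc (num_up xs) else num_up xs)"
  by (simp add: num_up_def)

lemma ph_formula: "path_height k w = (int k + 1) * int (num_up w) - int (length w)"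
  by (induction w) (auto simp: algebra_simps)

lemma dyck_Nil[simp]: "is_k_dyck_prefix k []"
  by (simp add: is_k_dyck_prefix_def)

lemma dyck_snoc: "is_k_dyck_prefix k (ys @ [y]) \<longleftrightarrow> is_k_dyck_prefix k ys \<and> path_height k (ys @ [y]) \<ge> 0"
proof
  assume a: "is_k_dyck_prefix k (ys @ [y])"
  have "path_height k (take i ys) \<ge> 0" if "i \<le> length ys" for i
    using a that unfolding is_k_dyck_prefix_def
    by (metis append.right_neutral diff_is_0_eq le_SucI length_append_singleton take0 take_append)
  moreover have "path_height k (ys @ [y]) \<ge> 0"
    using a unfolding is_k_dyck_prefix_def by (metis order_refl take_all)
  ultimately show "is_k_dyck_prefix k ys \<and> path_height k (ys @ [y]) \<ge> 0"
    unfolding is_k_dyck_prefix_def by auto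
next
  assume a: "is_k_dyck_prefix k ys \<and> path_height k (ys @ [y]) \<ge> 0"
  show "is_k_dyck_prefix k (ys @ [y])"
    unfolding is_k_dyck_prefix_def
  proof (intro allI impI)
    fix i assume "i \<le> length (ys @ [y])"
    then have "i \<le> length ys \<or> i = length ys + 1" by auto
    then show "path_height k (take i (ys @ [y])) \<ge> 0"
    proof
      assume "i \<le> length ys"
      then show ?thesis using a unfolding is_k_dyck_prefix_def by simp
    next
      assume "i = length ys + 1"
      then show ?thesis using a by simp
    qed
  qed
qed

lemma dyck_height: "is_k_dyck_prefix k w \<Longrightarrow> path_height k w \<ge> 0"
  unfolding is_k_dyck_prefix_def by (metis order_refl take_all)

definition Sset :: "nat \<Rightarrow> nat \<Rightarrow> int \<Rightarrow> bool list set" where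
  "Sset k n h = {w. is_k_dyck_prefix k w \<and> num_up w = n \<and> path_height k w = h}"

lemma Sset_finite: "finite (Sset k n h)"
proof -
  have "Sset k n h \<subseteq> {xs. set xs \<subseteq> UNIV \<and> length xs \<le> (k+1)*n}"
  proof
    fix w assume "w \<in> Sset k n h"
    then have "is_k_dyck_prefix k w" "num_up w = n" by (auto simp: Sset_def)
    then have "(int k + 1) * int n - int (length w) \<ge> 0"
      using dyck_height[of k w] ph_formula[of k w] by simp
    then have "int (length w) \<le> int ((k+1)*n)" by (simp add: algebra_simps)
    then show "w \<in> {xs. set xs \<subseteq> UNIV \<and> length xs \<le> (k+1)*n}" by (simp only: of_nat_le_iff) simp
  qed
  moreover have "finite {xs. set xs \<subseteq> (UNIV::bool set) \<and> length xs \<le> (k+1)*n}"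
    by (rule finite_lists_length_le) simp
  ultimately show ?thesis by (rule finite_subset)
qed

lemma Sset_neg: "h < 0 \<Longrightarrow> Sset k n h = {}"
  unfolding Sset_def using dyck_height by fastforce

lemma Sset_decomp:
  assumes "h \<ge> 0"
  shows "Sset k n h = (if n = 0 \<and> h = 0 then {[]} else {})
     \<union> (\<lambda>w. w @ [False]) ` Sset k n (h+1)
     \<union> (if n \<ge> 1 then (\<lambda>w. w @ [True]) ` Sset k (n-1) (h - int k) else {})"
  (is "?L = ?A \<union> ?B \<union> ?C")
proof
  show "?L \<subseteq> ?A \<union> ?B \<union> ?C"
  proof
    fix w assume w: "w \<in> ?L"
    show "w \<in> ?A \<union> ?B \<union> ?C"
    proof (cases w rule: rev_cases)
      case Nil then show ?thesis using w by (auto simp: Sset_def)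
    next
      case (snoc ys y)
      show ?thesis
      proof (cases y)
        case True
        then have "ys \<in> Sset k (n-1) (h - int k)" "n \<ge> 1"
          using w snoc by (auto simp: Sset_def dyck_snoc)
        then show ?thesis using snoc True by auto
      next
        case False
        then have "ys \<in> Sset k n (h + 1)"
          using w snoc by (auto simp: Sset_def dyck_snoc)
        then show ?thesis using snoc False by auto
      qed
    qed
  qed
next
  show "?A \<union> ?B \<union> ?C \<subseteq> ?L"
    using assms by (auto simp: Sset_def dyck_snoc split: if_splits)
qed

lemma Sset_rec:
  assumes "h \<ge> 0"
  shows "card (Sset k n h) = (if n = 0 \<and> h = 0 then 1 else 0) + card (Sset k n (h+1))
     + (if n \<ge> 1 then card (Sset k (n-1) (h - int k)) else 0)"
proof -
  have inj: "inj_on (\<lambda>w. w @ [b]) X" for b X by (auto simp: inj_on_def)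
  let ?A = "(if n = 0 \<and> h = 0 then {[]} else {}) :: bool list set"
  let ?B = "(\<lambda>w. w @ [False]) ` Sset k n (h+1)"
  let ?C = "(if n \<ge> 1 then (\<lambda>w. w @ [True]) ` Sset k (n-1) (h - int k) else {})"
  have fA: "finite ?A" by simp
  have fB: "finite ?B" using Sset_finite by simp
  have fC: "finite ?C" using Sset_finite by simp
  have d1: "?A \<inter> ?B = {}" by auto
  have d2: "(?A \<union> ?B) \<inter> ?C = {}" by auto
  have "card (Sset k n h) = card (?A \<union> ?B) + card ?C"
    using Sset_decomp[OF assms, of k n] card_Un_disjoint[OF _ fC d2] fA fB by simp
  also have "card (?A \<union> ?B) = card ?A + card ?B"
    using card_Un_disjoint[OF fA fB d1] .
  also have "card ?B = card (Sset k n (h+1))" by (rule card_image[OF inj])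
  also have "card ?C = (if n \<ge> 1 then card (Sset k (n-1) (h - int k)) else 0)"
    using card_image[OF inj, of True "Sset k (n-1) (h - int k)"] by simp
  finally show ?thesis by simp
qed



definition Good :: "nat \<Rightarrow> nat \<Rightarrow> bool list set" where
  "Good k n = {w. length w = (k+1)*n+1 \<and> num_up w = n \<and> (\<forall>i<length w. path_height k (take i w) \<ge> 0)}"

definition Alls :: "nat \<Rightarrow> nat \<Rightarrow> bool list set" where
  "Alls k n = {w. length w = (k+1)*n+1 \<and> num_up w = n}"

lemma ph_all: "length w = (k+1)*n+1 \<Longrightarrow> num_up w = n \<Longrightarrow> path_height k w = -1"
  by (simp add: ph_formula algebra_simps)

lemma rotate_split: "p \<le> length s \<Longrightarrow> rotate p s = drop p s @ take p s"
  by (metis append_take_drop_id length_take min_absorb2 rotate_append)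

lemma nu_rotate: "num_up (rotate p s) = num_up s"
proof -
  have "num_up s = num_up (take (p mod length s) s @ drop (p mod length s) s)" by simp
  then show ?thesis unfolding rotate_drop_take nu_append by simp
qed

lemma ph_take_drop: "path_height k s = path_height k (take p s) + path_height k (drop p s)"
  by (metis append_take_drop_id ph_append)

lemma rotate_full: "rotate (length s) s = s"
  by (simp add: rotate_id)

lemma key_not_good:
  assumes w: "w \<in> Good k n" and r: "0 < r" "r < length w"
  shows "rotate r w \<notin> Good k n"
proof
  assume g: "rotate r w \<in> Good k n"
  let ?L = "length w"
  have rw: "rotate r w = drop r w @ take r w" using r rotate_split[of r w] by simp
  have "take (?L - r) (rotate r w) = drop r w" using rw r by simp
  moreover have "path_height k (drop r w) < 0"
  proof -
    have "path_height k w = -1" using w ph_all by (auto simp: Good_def)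
    moreover have "path_height k (take r w) \<ge> 0" using w r by (auto simp: Good_def)
    ultimately show ?thesis using ph_take_drop[of k w r] by simp
  qed
  moreover have "?L - r < length (rotate r w)" using r by simp
  moreover have "\<forall>i<length (rotate r w). path_height k (take i (rotate r w)) \<ge> 0"
    using g unfolding Good_def by blast
  ultimately show False by force
qed

lemma rot_distinct:
  assumes w: "w \<in> Good k n" and i: "i < length w" "i' < length w" and e: "rotate i w = rotate i' w"
  shows "i = i'"
proof (rule ccontr)
  assume ne: "i \<noteq> i'"
  have gen: "False" if a: "a < b" "b < length w" "rotate a w = rotate b w" for a b
  proof -
    have eqa: "length w - a + a = length w" using a by simp
    have f1: "rotate (length w - a) (rotate a w) = w"
      by (simp only: rotate_rotate eqa rotate_full)
    have f2: "rotate (length w - a) (rotate b w) = rotate (b - a) w"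
    proof -
      have eq: "length w - a + b = (b - a) + length w" using a by simp
      have "rotate (length w - a) (rotate b w) = rotate (b - a) (rotate (length w) w)"
        by (simp only: rotate_rotate eq)
      then show ?thesis by (simp add: rotate_full)
    qed
    have "rotate (b - a) w = w" using f1 f2 a(3) by (simp only:)
    then have "rotate (b - a) w \<in> Good k n" using w by simp
    moreover have "rotate (b - a) w \<notin> Good k n" using key_not_good[OF w, of "b - a"] a by simp
    ultimately show False by simp
  qed
  show False
  proof (cases "i < i'")
    case True then show ?thesis using gen[of i i'] i e by simp
  next
    case False then have "i' < i" using ne by simp
    then show ?thesis using gen[of i' i] i e by simp
  qed
qed

lemma rot_inj:
  assumes w: "w \<in> Good k n" and w': "w' \<in> Good k n"
    and i: "i < (k+1)*n+1" "i' < (k+1)*n+1" and e: "rotate i w = rotate i' w'"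
  shows "w = w' \<and> i = i'"
proof -
  let ?L = "(k+1)*n+1"
  have lw: "length w = ?L" "length w' = ?L" using w w' by (auto simp: Good_def)
  have eq: "?L - i' + i' = length w'" using i lw by simp
  have "w' = rotate (?L - i') (rotate i' w')"
    by (simp only: rotate_rotate eq rotate_full)
  also have "\<dots> = rotate (?L - i') (rotate i w)" using e by (simp only:)
  also have "\<dots> = rotate (?L - i' + i) w" by (rule rotate_rotate)
  also have "\<dots> = rotate ((?L - i' + i) mod ?L) w" by (rule rotate_conv_mod[of _ w, unfolded lw(1)])
  finally have w'eq: "w' = rotate ((?L - i' + i) mod ?L) w" .
  have "(?L - i' + i) mod ?L = 0"
  proof (rule ccontr)
    assume "(?L - i' + i) mod ?L \<noteq> 0"
    then have "rotate ((?L - i' + i) mod ?L) w \<notin> Good k n"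
      using key_not_good[OF w] lw by simp
    then show False using w'eq w' by simp
  qed
  then have "w' = w" using w'eq by simp
  moreover have "i = i'" using rot_distinct[OF w, of i i'] e lw i \<open>w' = w\<close> by simp
  ultimately show ?thesis by simp
qed

lemma rot_surj:
  assumes s: "s \<in> Alls k n"
  shows "\<exists>w i. w \<in> Good k n \<and> i < (k+1)*n+1 \<and> s = rotate i w"
proof -
  let ?L = "(k+1)*n+1"
  have ls: "length s = ?L" and ns: "num_up s = n" using s by (auto simp: Alls_def)
  define h where "h q = path_height k (take q s)" for q
  have hL: "h ?L = -1" using ph_all[OF ls ns] ls by (simp add: h_def)
  have h0: "h 0 = 0" by (simp add: h_def)
  define \<mu> where "\<mu> = Min (h ` {0..?L})"
  have fin: "finite (h ` {0..?L})" by simp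
  have muq: "\<mu> \<le> h q" if "q \<le> ?L" for q unfolding \<mu>_def using fin that by simp
  have "\<mu> \<in> h ` {0..?L}" unfolding \<mu>_def using fin by (intro Min_in) auto
  then obtain q0 where q0: "q0 \<le> ?L" "h q0 = \<mu>" by auto
  define p where "p = (LEAST q. q \<le> ?L \<and> h q = \<mu>)"
  have pP: "p \<le> ?L \<and> h p = \<mu>" unfolding p_def by (rule LeastI[of _ q0]) (use q0 in simp)
  then have p: "p \<le> ?L" "h p = \<mu>" by simp_all
  have pmin: "h q > \<mu>" if "q < p" for q
  proof -
    have "\<not> (q \<le> ?L \<and> h q = \<mu>)" by (rule not_less_Least) (use that in \<open>simp add: p_def\<close>)
    moreover have "q \<le> ?L" using that p by simp
    ultimately show ?thesis using muq[of q] by simp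
  qed
  have mule: "\<mu> \<le> -1" using muq[of ?L] hL by simp
  have p1: "p \<ge> 1" using p h0 mule by (cases p) auto
  define w where "w = rotate p s"
  have wsplit: "w = drop p s @ take p s" using rotate_split[of p s] p ls by (simp add: w_def)
  have hdrop: "path_height k (drop p s) = -1 - \<mu>"
    using ph_take_drop[of k s p] ph_all[OF ls ns] p by (simp add: h_def)
  have wgood: "w \<in> Good k n"
    unfolding Good_def
  proof (intro CollectI conjI allI impI)
    show "length w = ?L" using ls by (simp add: w_def)
    show "num_up w = n" using ns by (simp add: w_def nu_rotate)
    fix q assume q: "q < length w"
    then have q': "q < ?L" using ls by (simp add: w_def)
    show "path_height k (take q w) \<ge> 0"
    proof (cases "q \<le> ?L - p")
      case True
      then have "take q w = take q (drop p s)" using wsplit ls by simp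
      moreover have "take (p + q) s = take p s @ take q (drop p s)" by (rule take_add)
      ultimately have "path_height k (take q w) = h (p + q) - h p"
        by (simp add: h_def)
      moreover have "h (p + q) \<ge> \<mu>" using muq True p by simp
      ultimately show ?thesis using p by simp
    next
      case False
      define q' where "q' = q - (?L - p)"
      have q'p: "q' < p" using q' False p by (simp add: q'_def)
      have "take q w = drop p s @ take q' (take p s)"
        using wsplit ls False p by (simp add: q'_def)
      also have "take q' (take p s) = take q' s" using q'p by simp
      finally have "path_height k (take q w) = -1 - \<mu> + h q'" using hdrop by (simp add: h_def)
      moreover have "h q' \<ge> \<mu> + 1" using pmin[OF q'p] by simp
      ultimately show ?thesis by simp
    qed
  qed
  have eq: "?L - p + p = length s" using p ls by simp
  have "rotate (?L - p) w = s"
    unfolding w_def by (simp only: rotate_rotate eq rotate_full)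
  moreover have "?L - p < ?L" using p1 by simp
  ultimately show ?thesis using wgood by blast
qed

lemma card_Alls_Good: "card (Alls k n) = card (Good k n) * ((k+1)*n+1)"
proof -
  let ?L = "(k+1)*n+1"
  have "bij_betw (\<lambda>(w,i). rotate i w) (Good k n \<times> {0..<?L}) (Alls k n)"
    unfolding bij_betw_def
  proof
    show "inj_on (\<lambda>(w,i). rotate i w) (Good k n \<times> {0..<?L})"
      unfolding inj_on_def using rot_inj by fastforce
    show "(\<lambda>(w,i). rotate i w) ` (Good k n \<times> {0..<?L}) = Alls k n"
    proof
      show "(\<lambda>(w,i). rotate i w) ` (Good k n \<times> {0..<?L}) \<subseteq> Alls k n"
        by (auto simp: Good_def Alls_def nu_rotate)
      show "Alls k n \<subseteq> (\<lambda>(w,i). rotate i w) ` (Good k n \<times> {0..<?L})"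
      proof
        fix s assume "s \<in> Alls k n"
        then obtain w i where "w \<in> Good k n" "i < ?L" "s = rotate i w" using rot_surj by blast
        then show "s \<in> (\<lambda>(w,i). rotate i w) ` (Good k n \<times> {0..<?L})" by force
      qed
    qed
  qed
  then have "card (Good k n \<times> {0..<?L}) = card (Alls k n)" by (rule bij_betw_same_card)
  then show ?thesis by (simp add: card_cartesian_product)
qed

lemma card_Alls: "card (Alls k n) = ((k+1)*n+1) choose n"
proof -
  let ?L = "(k+1)*n+1"
  let ?B = "{B. B \<subseteq> {0..<?L} \<and> card B = n}"
  have nucard: "num_up w = card {i. i < length w \<and> w ! i}" for w
  proof -
    have "num_up w = card {i. i < length w \<and> id (w ! i)}"
      unfolding num_up_def by (rule length_filter_conv_card)
    then show ?thesis by simp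
  qed
  have "bij_betw (\<lambda>w. {i. i < ?L \<and> w ! i}) (Alls k n) ?B"
    unfolding bij_betw_def
  proof
    show "inj_on (\<lambda>w. {i. i < ?L \<and> w ! i}) (Alls k n)"
    proof (rule inj_onI)
      fix x y assume x: "x \<in> Alls k n" and y: "y \<in> Alls k n"
        and e: "{i. i < ?L \<and> x ! i} = {i. i < ?L \<and> y ! i}"
      have lx: "length x = ?L" "length y = ?L" using x y by (auto simp: Alls_def)
      show "x = y"
      proof (rule nth_equalityI)
        show "length x = length y" using lx by simp
        fix i assume i: "i < length x"
        have "(i \<in> {i. i < ?L \<and> x ! i}) = (i \<in> {i. i < ?L \<and> y ! i})" using e by (simp only:)
        then show "x ! i = y ! i" using i lx by simp
      qed
    qed
    show "(\<lambda>w. {i. i < ?L \<and> w ! i}) ` Alls k n = ?B"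
    proof
      show "(\<lambda>w. {i. i < ?L \<and> w ! i}) ` Alls k n \<subseteq> ?B"
      proof
        fix B assume "B \<in> (\<lambda>w. {i. i < ?L \<and> w ! i}) ` Alls k n"
        then obtain w where w: "w \<in> Alls k n" and B: "B = {i. i < ?L \<and> w ! i}" by blast
        have lw: "length w = ?L" "num_up w = n" using w by (simp_all add: Alls_def)
        have "card B = n" using nucard[of w] lw B by simp
        moreover have "B \<subseteq> {0..<?L}" using B by auto
        ultimately show "B \<in> ?B" by simp
      qed
      show "?B \<subseteq> (\<lambda>w. {i. i < ?L \<and> w ! i}) ` Alls k n"
      proof
        fix B assume B: "B \<in> ?B"
        then have Bs: "B \<subseteq> {0..<?L}" and Bc: "card B = n" by simp_all
        define w where "w = map (\<lambda>i. i \<in> B) [0..<?L]"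
        have lw: "length w = ?L" unfolding w_def by (simp del: upt_Suc)
        have wi: "w ! i = (i \<in> B)" if "i < ?L" for i using that unfolding w_def by (simp del: upt_Suc)
        have setB: "{i. i < ?L \<and> w ! i} = B"
        proof
          show "{i. i < ?L \<and> w ! i} \<subseteq> B" using wi by blast
          show "B \<subseteq> {i. i < ?L \<and> w ! i}"
          proof
            fix i assume "i \<in> B"
            then have "i < ?L" using Bs by auto
            then show "i \<in> {i. i < ?L \<and> w ! i}" using wi \<open>i \<in> B\<close> by simp
          qed
        qed
        have "num_up w = n" using nucard[of w] lw setB Bc by simp
        then have "w \<in> Alls k n" using lw by (simp add: Alls_def)
        then show "B \<in> (\<lambda>w. {i. i < ?L \<and> w ! i}) ` Alls k n" using setB[symmetric] by (rule rev_image_eqI)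
      qed
    qed
  qed
  then have "card (Alls k n) = card ?B" by (rule bij_betw_same_card)
  also have "\<dots> = ?L choose n" using n_subsets[of "{0..<?L}" n] by simp
  finally show ?thesis .
qed

lemma card_S0_Good: "card (Sset k n 0) = card (Good k n)"
proof -
  have "bij_betw (\<lambda>w. w @ [False]) (Sset k n 0) (Good k n)"
    unfolding bij_betw_def
  proof
    show "inj_on (\<lambda>w. w @ [False]) (Sset k n 0)" by (auto simp: inj_on_def)
    show "(\<lambda>w. w @ [False]) ` Sset k n 0 = Good k n"
    proof
      show "(\<lambda>w. w @ [False]) ` Sset k n 0 \<subseteq> Good k n"
      proof
        fix x assume "x \<in> (\<lambda>w. w @ [False]) ` Sset k n 0"
        then obtain w where w: "w \<in> Sset k n 0" and x: "x = w @ [False]" by auto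
        have d: "is_k_dyck_prefix k w" "num_up w = n" "path_height k w = 0"
          using w by (auto simp: Sset_def)
        have lw: "length w = (k+1)*n"
        proof -
          have "int (length w) = (int k + 1) * int n" using d ph_formula[of k w] by simp
          then have "int (length w) = int ((k+1)*n)" by (simp add: algebra_simps)
          then show ?thesis by (simp only: of_nat_eq_iff)
        qed
        have "path_height k (take i x) \<ge> 0" if "i < length x" for i
        proof -
          have "i \<le> length w" using that x by simp
          then have "take i x = take i w" using x by simp
          then show ?thesis using d(1) \<open>i \<le> length w\<close> unfolding is_k_dyck_prefix_def by simp
        qed
        then show "x \<in> Good k n" using lw d x by (simp add: Good_def)
      qed
      show "Good k n \<subseteq> (\<lambda>w. w @ [False]) ` Sset k n 0"
      proof
        fix x assume x: "x \<in> Good k n"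
        have lx: "length x = (k+1)*n+1" and nx: "num_up x = n" using x by (auto simp: Good_def)
        have px: "path_height k x = -1" using ph_all[OF lx nx] .
        obtain ys y where xs: "x = ys @ [y]" using lx by (cases x rule: rev_cases) auto
        have pys: "path_height k ys \<ge> 0"
          proof -
          have "take (length ys) x = ys" "length ys < length x" using xs by auto
          then show ?thesis using x unfolding Good_def by (metis (mono_tags, lifting) mem_Collect_eq)
        qed
        have yF: "y = False"
        proof (rule ccontr)
          assume "y \<noteq> False" then have "y" by simp
          then have "path_height k x = path_height k ys + int k" using xs by simp
          then show False using px pys by simp
        qed
        have pys0: "path_height k ys = 0" using px xs yF by simp
        have "is_k_dyck_prefix k ys"
          unfolding is_k_dyck_prefix_def
        proof (intro allI impI)
          fix i assume "i \<le> length ys"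
          then have "take i x = take i ys" "i < length x" using xs by auto
          then show "path_height k (take i ys) \<ge> 0" using x by (auto simp: Good_def)
        qed
        then have "ys \<in> Sset k n 0" using nx xs yF pys0 by (simp add: Sset_def)
        then show "x \<in> (\<lambda>w. w @ [False]) ` Sset k n 0" using xs yF by blast
      qed
    qed
  qed
  then show ?thesis by (rule bij_betw_same_card)
qed

lemma card_S0: "real (card (Sset k n 0)) = real (((k+1)*n+1) choose n) / real ((k+1)*n+1)"
proof -
  have "card (Alls k n) = card (Sset k n 0) * ((k+1)*n+1)"
    using card_Alls_Good card_S0_Good by simp
  then have "real (((k+1)*n+1) choose n) = real (card (Sset k n 0)) * real ((k+1)*n+1)"
    using card_Alls by (metis of_nat_mult)
  moreover have nz: "real ((k+1)*n+1) \<noteq> 0" by (simp only: of_nat_eq_0_iff)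
  ultimately show ?thesis by (metis nonzero_mult_div_cancel_right)
qed



definition cat :: "nat \<Rightarrow> int \<Rightarrow> real" where
  "cat k d = 1 / real_of_int (1 + d * (int k + 1)) * ibinom (1 + d * (int k + 1)) d"

definition trm :: "nat \<Rightarrow> int \<Rightarrow> int \<Rightarrow> nat \<Rightarrow> real" where
  "trm k n j m = (-1) ^ m * ibinom (j - int k * int m) (int m) * cat k (n - int m)"

definition Ssum :: "nat \<Rightarrow> int \<Rightarrow> int \<Rightarrow> real" where
  "Ssum k n j = (\<Sum>m\<in>{0..nat j}. trm k n j m)"

definition Tt :: "nat \<Rightarrow> nat \<Rightarrow> int \<Rightarrow> real" where
  "Tt k n j = (-1) ^ n * ibinom (j - 1 - int k * int n) (int n)"

definition R :: "nat \<Rightarrow> nat \<Rightarrow> int \<Rightarrow> real" where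
  "R k n j = Ssum k (int n) j - Tt k n j"

lemma ibinom_neg_top: "a < 0 \<Longrightarrow> ibinom a b = 0" by (simp add: ibinom_def)
lemma ibinom_neg_bot: "b < 0 \<Longrightarrow> ibinom a b = 0" by (simp add: ibinom_def)
lemma ibinom_0: "a \<ge> 0 \<Longrightarrow> ibinom a 0 = 1" by (simp add: ibinom_def)

lemma ibinom_pascal: "ibinom (a + 1) (int m + 1) = ibinom a (int m) + ibinom a (int m + 1)"
proof (cases "a \<ge> 0")
  case True
  have e1: "nat (a + 1) = Suc (nat a)" using True by simp
  have e2: "nat (int m + 1) = Suc m" by simp
  show ?thesis using True unfolding ibinom_def e1 e2 by (simp add: binomial_Suc_Suc)
next
  case False
  then show ?thesis by (cases "a = -1") (auto simp: ibinom_def)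
qed

lemma cat_neg: "d < 0 \<Longrightarrow> cat k d = 0" by (simp add: cat_def ibinom_neg_bot)
lemma cat_0: "cat k 0 = 1" by (simp add: cat_def ibinom_def)

lemma trm_zero:
  assumes k: "k \<ge> 1" and m: "m > nat j"
  shows "trm k n j m = 0"
proof -
  have "m \<le> k * m" using k mult_le_mono1[of 1 k m] by simp
  then have "int k * int m \<ge> int m" by (metis of_nat_le_iff of_nat_mult)
  moreover have "int m > j" using m by linarith
  ultimately have "j - int k * int m < 0" by linarith
  then show ?thesis by (simp add: trm_def ibinom_neg_top)
qed

lemma Ssum_ext:
  assumes k: "k \<ge> 1" and M: "nat j \<le> M"
  shows "(\<Sum>m\<in>{0..M}. trm k n j m) = Ssum k n j"
  unfolding Ssum_def
  by (rule sum.mono_neutral_right) (use M trm_zero[OF k] in auto)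

lemma trm_diff_Suc:
  "trm k n j (Suc i) - trm k n (j + 1) (Suc i) = trm k (n - 1) (j - int k) i"
proof -
  define a where "a = j - int k * int (Suc i)"
  have a1: "j + 1 - int k * int (Suc i) = a + 1" by (simp add: a_def)
  have a2: "j - int k - int k * int i = a" by (simp add: a_def algebra_simps)
  have c: "n - int (Suc i) = n - 1 - int i" by simp
  have "trm k n j (Suc i) - trm k n (j + 1) (Suc i)
      = (-1) ^ Suc i * (ibinom a (int (Suc i)) - ibinom (a + 1) (int (Suc i))) * cat k (n - 1 - int i)"
    unfolding trm_def a1 c a_def[symmetric] by (simp add: algebra_simps)
  also have "ibinom (a + 1) (int (Suc i)) = ibinom a (int i) + ibinom a (int i + 1)"
    unfolding of_nat_Suc add.commute[of 1] by (rule ibinom_pascal)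
  finally show ?thesis unfolding trm_def a2 by (simp add: algebra_simps)
qed

lemma Ssum_rec:
  assumes k: "k \<ge> 1" and j: "j \<ge> 0"
  shows "Ssum k n j - Ssum k n (j + 1) = Ssum k (n - 1) (j - int k)"
proof -
  define M where "M = Suc (nat j)"
  have s1: "Ssum k n j = (\<Sum>m\<in>{0..M}. trm k n j m)"
    using Ssum_ext[OF k, of j M] by (simp add: M_def)
  have s2: "Ssum k n (j + 1) = (\<Sum>m\<in>{0..M}. trm k n (j + 1) m)"
    using Ssum_ext[OF k, of "j+1" M] j by (simp add: M_def)
  have "Ssum k n j - Ssum k n (j + 1) = (\<Sum>m\<in>{0..M}. trm k n j m - trm k n (j + 1) m)"
    unfolding s1 s2 by (simp add: sum_subtractf)
  also have "\<dots> = (trm k n j 0 - trm k n (j + 1) 0)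
      + (\<Sum>m\<in>{Suc 0..Suc (nat j)}. trm k n j m - trm k n (j + 1) m)"
    unfolding M_def by (subst sum.atLeast_Suc_atMost) simp_all
  also have "trm k n j 0 - trm k n (j + 1) 0 = 0"
    using j by (simp add: trm_def ibinom_0)
  also have "(\<Sum>m\<in>{Suc 0..Suc (nat j)}. trm k n j m - trm k n (j + 1) m)
      = (\<Sum>i\<in>{0..nat j}. trm k n j (Suc i) - trm k n (j + 1) (Suc i))"
    by (rule sum.shift_bounds_cl_Suc_ivl)
  also have "\<dots> = (\<Sum>i\<in>{0..nat j}. trm k (n - 1) (j - int k) i)"
    by (simp add: trm_diff_Suc)
  also have "\<dots> = Ssum k (n - 1) (j - int k)"
    by (rule Ssum_ext[OF k]) simp
  finally show ?thesis by simp
qed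

lemma Tt_rec:
  "Tt k (Suc n) j - Tt k (Suc n) (j + 1) = Tt k n (j - int k)"
proof -
  define c where "c = j - 1 - int k * int (Suc n)"
  have c1: "j + 1 - 1 - int k * int (Suc n) = c + 1" by (simp add: c_def)
  have c2: "j - int k - 1 - int k * int n = c" by (simp add: c_def algebra_simps)
  have "Tt k (Suc n) j - Tt k (Suc n) (j + 1)
      = (-1) ^ Suc n * (ibinom c (int (Suc n)) - ibinom (c + 1) (int (Suc n)))"
    unfolding Tt_def c1 c_def[symmetric] by (simp add: algebra_simps)
  also have "ibinom (c + 1) (int (Suc n)) = ibinom c (int n) + ibinom c (int n + 1)"
    unfolding of_nat_Suc add.commute[of 1] by (rule ibinom_pascal)
  finally show ?thesis unfolding Tt_def c2 by (simp add: algebra_simps)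
qed

lemma R_rec:
  assumes k: "k \<ge> 1" and j: "j \<ge> 0"
  shows "R k (Suc n) j - R k (Suc n) (j + 1) = R k n (j - int k)"
proof -
  have "Ssum k (int (Suc n)) j - Ssum k (int (Suc n)) (j + 1) = Ssum k (int n) (j - int k)"
    using Ssum_rec[OF k j, of "int (Suc n)"] by simp
  then show ?thesis using Tt_rec[of k n j] unfolding R_def by simp
qed

lemma R_0:
  assumes k: "k \<ge> 1" and j: "j \<ge> 0"
  shows "R k 0 j = (if j = 0 then 1 else 0)"
proof -
  have "Ssum k 0 j = (\<Sum>m\<in>{0..0}. trm k 0 j m)"
    unfolding Ssum_def
    by (rule sum.mono_neutral_right) (auto simp: trm_def cat_neg)
  also have "\<dots> = 1" using j by (simp add: trm_def ibinom_0 cat_0)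
  finally have "Ssum k 0 j = 1" .
  moreover have "Tt k 0 j = (if j = 0 then 0 else 1)"
    using j by (auto simp: Tt_def ibinom_def)
  ultimately show ?thesis unfolding R_def by simp
qed

lemma R_n0: "R k n 0 = cat k (int n)"
proof -
  have S0: "Ssum k (int n) 0 = cat k (int n)" by (simp add: Ssum_def trm_def ibinom_def)
  have "0 - 1 - int k * int n < 0" by (smt (verit) mult_nonneg_nonneg of_nat_0_le_iff)
  then have T0: "Tt k n 0 = 0" unfolding Tt_def by (simp only: ibinom_neg_top)
  show ?thesis unfolding R_def using S0 T0 by simp
qed

lemma R_neg:
  assumes k: "k \<ge> 1" and j: "j < 0"
  shows "R k n j = 0"
proof -
  have S0: "Ssum k (int n) j = 0" using j by (simp add: Ssum_def trm_def ibinom_neg_top)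
  have "j - 1 - int k * int n < 0" using j by (smt (verit) mult_nonneg_nonneg of_nat_0_le_iff)
  then have T0: "Tt k n j = 0" unfolding Tt_def by (simp only: ibinom_neg_top)
  show ?thesis unfolding R_def using S0 T0 by simp
qed

lemma ibinom_nat: "ibinom (int a) (int b) = real (a choose b)" by (simp add: ibinom_def)

lemma cat_card: "real (card (Sset k n 0)) = cat k (int n)"
proof -
  have e: "1 + int n * (int k + 1) = int ((k+1)*n+1)" by (simp add: algebra_simps)
  show ?thesis unfolding card_S0 cat_def e ibinom_nat of_int_of_nat_eq by simp
qed

lemma main_count:
  assumes k: "k \<ge> 1"
  shows "real (card (Sset k n (int h))) = R k n (int h)"
proof (induction n arbitrary: h)
  case 0
  show ?case
  proof (induction h)
    case 0
    then show ?case using cat_card[of k 0] R_n0[of k 0] by simp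
  next
    case (Suc h)
    have "card (Sset k 0 (int h)) = (if h = 0 then 1 else 0) + card (Sset k 0 (int h + 1))"
      using Sset_rec[of "int h" k 0] by simp
    then have "real (card (Sset k 0 (int (Suc h)))) = real (card (Sset k 0 (int h))) - (if h = 0 then 1 else 0)"
      by (simp add: add.commute)
    also have "\<dots> = 0" using Suc R_0[OF k, of "int h"] by simp
    also have "\<dots> = R k 0 (int (Suc h))" using R_0[OF k, of "int (Suc h)"] by simp
    finally show ?case .
  qed
next
  case (Suc n)
  note IHn = Suc.IH
  show ?case
  proof (induction h)
    case 0
    then show ?case using cat_card[of k "Suc n"] R_n0[of k "Suc n"] by simp
  next
    case (Suc h)
    note IHh = Suc
    have rec: "card (Sset k (Suc n) (int h)) = card (Sset k (Suc n) (int h + 1)) + card (Sset k n (int h - int k))"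
      using Sset_rec[of "int h" k "Suc n"] by simp
    have low: "real (card (Sset k n (int h - int k))) = R k n (int h - int k)"
    proof (cases "int h - int k \<ge> 0")
      case True
      then have "int h - int k = int (nat (int h - int k))" by simp
      then show ?thesis using IHn[of "nat (int h - int k)"] by metis
    next
      case False
      then show ?thesis using Sset_neg[of "int h - int k" k n] R_neg[OF k, of "int h - int k" n] by simp
    qed
    have "real (card (Sset k (Suc n) (int (Suc h)))) = real (card (Sset k (Suc n) (int h))) - real (card (Sset k n (int h - int k)))"
      using rec by (simp add: add.commute)
    also have "\<dots> = R k (Suc n) (int h) - R k n (int h - int k)" using IHh low by simp
    also have "\<dots> = R k (Suc n) (int (Suc h))" using R_rec[OF k, where j="int h" and n=n] by (simp add: add.commute)
    finally show ?case .
  qed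
qed


lemma trm_zero_div:
  assumes k: "k \<ge> 1" and m: "j div k < m"
  shows "trm k n (int j) m = 0"
proof -
  have "j < k * m" using m k by (simp add: div_less_iff_less_mult mult.commute)
  then have "int j - int k * int m < 0" by (metis diff_less_0_iff_less of_nat_less_iff of_nat_mult)
  then show ?thesis by (simp add: trm_def ibinom_neg_top)
qed

theorem mainTheorem3:
  fixes k n j :: nat
  assumes "k \<ge> 1"
  shows "real (card {ws. is_k_dyck_prefix k ws \<and> num_up ws = n + 1 \<and> ws \<noteq> [] \<and> last ws
                 \<and> path_height k ws = int j + int k})
       = (\<Sum>m\<in>{0..j div k}.
            (-1) ^ m * ibinom (int j - int k * int m) (int m)
            * (1 / (1 + (int n - int m) * (int k + 1)))
            * ibinom (1 + (int n - int m) * (int k + 1)) (int n - int m))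
         - (-1) ^ n * ibinom (int j - 1 - int k * int n) (int n)"
proof -
  let ?X = "{ws. is_k_dyck_prefix k ws \<and> num_up ws = n + 1 \<and> ws \<noteq> [] \<and> last ws
                 \<and> path_height k ws = int j + int k}"
  have X: "?X = (\<lambda>w. w @ [True]) ` Sset k n (int j)"
  proof
    show "?X \<subseteq> (\<lambda>w. w @ [True]) ` Sset k n (int j)"
    proof
      fix ws assume ws: "ws \<in> ?X"
      then have ne: "ws \<noteq> []" and l: "last ws" by auto
      have e: "ws = butlast ws @ [True]" using ne l by (metis append_butlast_last_id)
      define ys where "ys = butlast ws"
      have e2: "ws = ys @ [True]" using e by (simp add: ys_def)
      have d: "is_k_dyck_prefix k (ys @ [True])" "num_up (ys @ [True]) = n + 1"
        "path_height k (ys @ [True]) = int j + int k" using ws e2 by (simp_all only: mem_Collect_eq)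
      have "is_k_dyck_prefix k ys" using d(1) dyck_snoc by blast
      moreover have "num_up ys = n" using d(2) by simp
      moreover have "path_height k ys = int j" using d(3) by simp
      ultimately have "butlast ws \<in> Sset k n (int j)" unfolding Sset_def ys_def by simp
      then show "ws \<in> (\<lambda>w. w @ [True]) ` Sset k n (int j)" using e by (rule rev_image_eqI)
    qed
    show "(\<lambda>w. w @ [True]) ` Sset k n (int j) \<subseteq> ?X"
      by (auto simp: Sset_def dyck_snoc)
  qed
  have "card ?X = card (Sset k n (int j))"
    unfolding X by (rule card_image) (auto simp: inj_on_def)
  then have L: "real (card ?X) = R k n (int j)" using main_count[OF assms] by simp
  have "Ssum k (int n) (int j) = (\<Sum>m\<in>{0..j div k}. trm k (int n) (int j) m)"
    unfolding Ssum_def nat_int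
    by (rule sum.mono_neutral_right) (use trm_zero_div[OF assms] in \<open>auto simp: div_le_dividend\<close>)
  then have "R k n (int j) = (\<Sum>m\<in>{0..j div k}. trm k (int n) (int j) m) - Tt k n (int j)"
    unfolding R_def by simp
  also have "\<dots> = (\<Sum>m\<in>{0..j div k}.
            (-1) ^ m * ibinom (int j - int k * int m) (int m)
            * (1 / (1 + (int n - int m) * (int k + 1)))
            * ibinom (1 + (int n - int m) * (int k + 1)) (int n - int m))
         - (-1) ^ n * ibinom (int j - 1 - int k * int n) (int n)"
    unfolding trm_def cat_def Tt_def by (simp add: mult.assoc)
  finally show ?thesis using L by simp
qed

end
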